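(* In the production planning setting described in the context, fix $\pmb{x}\in\mathbb{X}$, assume $\Gamma^c\in\mathbb{Z}_+$ and $\Delta_t\in\mathbb{Z}_+$ for all $t\in[T]$, and let $G$ with arc costs be as defined in the context. Then for every real $C^*$: a solution with cost $C^*$ is optimal for the problem $$\max\ \sum_{t\in[T]}\max\{f_I(X_t,\widehat{D}_t-\delta_t),f_B(X_t,\widehat{D}_t+\delta_t)\}\ \text{ s.t. }\ \sum_{t\in[T]}\delta_t\le\Gamma^c,\ 0\le\delta_t\le\Delta_t\ (t\in[T])$$ if and only if there is a longest $\mathfrak{s}$-$\mathfrak{t}$ path in $G$ with length $C^*$.
   Context: There are $T\ge 1$ periods, $[T]=\{1,\dots,T\}$. Given are costs $c^P,c^I,c^B$, a selling price $b^P$, and a set $\mathbb{X}\subseteq\mathbb{R}^T_+$ of feasible production plans described by finitely many linear constraints; for a plan $X_t=\sum_{i\in[t]}x_i$. For $t\in[T-1]$ let $f_I(X_t,D_t)=c^I(X_t-D_t)$, $f_B(X_t,D_t)=c^B(D_t-X_t)$; for $t=T$ let $f_I(X_T,D_T)=c^I(X_T-D_T)+c^PX_T-b^PD_T$, $f_B(X_T,D_T)=c^B(D_T-X_T)+c^PX_T-b^PX_T$. Nominal cumulative demands $\widehat{D}_t\ge0$ are nondecreasing, deviations $0\le\Delta_t\le\widehat{D}_t$, budget $\Gamma^c$. The directed layered graph $G$ has layers $V_0=\{\mathfrak{s}\}$ with $\mathfrak{s}=0^0$, $V_t=\{t^0,t^1,\dots,t^{\Gamma^c}\}$ for $t\in[T]$,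 and $V_{T+1}=\{\mathfrak{t}\}$. For $t\in[T]$, each node $(t-1)^{\delta}\in V_{t-1}$ and each integer $\delta_t\in\{0,\dots,\Delta_t\}$ with $\delta+\delta_t\le\Gamma^c$, there is an arc $((t-1)^{\delta},t^{\delta+\delta_t})$ with cost $\max\{f_I(X_t,\widehat{D}_t-\delta_t),f_B(X_t,\widehat{D}_t+\delta_t)\}$; every node of $V_T$ is joined to $\mathfrak{t}$ by an arc of cost $0$. The length of a path is the sum of its arc costs. *)

theory Defs
  imports Complex_Main
begin

definition cumX :: "(nat \<Rightarrow> real) \<Rightarrow> nat \<Rightarrow> real" where
  "cumX x t = (\<Sum>i\<in>{1..t}. x i)"

definition fI :: "nat \<Rightarrow> real \<Rightarrow> real \<Rightarrow> real \<Rightarrow> nat \<Rightarrow> real \<Rightarrow> real \<Rightarrow> real" where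
  "fI T cP cI bP t X D =
     (if t < T then cI * (X - D) else cI * (X - D) + cP * X - bP * D)"

definition fB :: "nat \<Rightarrow> real \<Rightarrow> real \<Rightarrow> real \<Rightarrow> nat \<Rightarrow> real \<Rightarrow> real \<Rightarrow> real" where
  "fB T cP cB bP t X D =
     (if t < T then cB * (D - X) else cB * (D - X) + cP * X - bP * X)"

definition period_cost ::
  "nat \<Rightarrow> real \<Rightarrow> real \<Rightarrow> real \<Rightarrow> real \<Rightarrow> (nat \<Rightarrow> real) \<Rightarrow> (nat \<Rightarrow> real)
   \<Rightarrow> nat \<Rightarrow> real \<Rightarrow> real" where
  "period_cost T cP cI cB bP Dhat x t d =
     max (fI T cP cI bP t (cumX x t) (Dhat t - d)) (fB T cP cB bP t (cumX x t) (Dhat t + d))"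

definition feasible_dev :: "nat \<Rightarrow> nat \<Rightarrow> (nat \<Rightarrow> nat) \<Rightarrow> (nat \<Rightarrow> real) \<Rightarrow> bool" where
  "feasible_dev T Gamma Delta \<delta> \<longleftrightarrow>
     (\<Sum>t\<in>{1..T}. \<delta> t) \<le> real Gamma \<and> (\<forall>t\<in>{1..T}. 0 \<le> \<delta> t \<and> \<delta> t \<le> real (Delta t))"

definition objective :: "nat \<Rightarrow> (nat \<Rightarrow> real \<Rightarrow> real) \<Rightarrow> (nat \<Rightarrow> real) \<Rightarrow> real" where
  "objective T g \<delta> = (\<Sum>t\<in>{1..T}. g t (\<delta> t))"

text \<open>The layered graph G. Node Nd t k is t^k (so the source s = 0^0 is Nd 0 0), Snk is the sink.\<close>
datatype node = Nd nat nat | Snk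

definition is_vertex :: "nat \<Rightarrow> nat \<Rightarrow> node \<Rightarrow> bool" where
  "is_vertex T Gamma v = (case v of
      Nd t k \<Rightarrow> (t = 0 \<and> k = 0) \<or> (1 \<le> t \<and> t \<le> T \<and> k \<le> Gamma)
    | Snk \<Rightarrow> True)"

definition is_arc :: "nat \<Rightarrow> nat \<Rightarrow> (nat \<Rightarrow> nat) \<Rightarrow> node \<Rightarrow> node \<Rightarrow> bool" where
  "is_arc T Gamma Delta u v = (is_vertex T Gamma u \<and> is_vertex T Gamma v \<and>
     (case (u, v) of
        (Nd s k, Nd t k') \<Rightarrow> 1 \<le> t \<and> t \<le> T \<and> s + 1 = t \<and> k \<le> k' \<and> k' - k \<le> Delta t \<and> k' \<le> Gamma
      | (Nd s k, Snk) \<Rightarrow> s = T \<and> 1 \<le> T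
      | _ \<Rightarrow> False))"

definition arc_cost :: "(nat \<Rightarrow> real \<Rightarrow> real) \<Rightarrow> node \<Rightarrow> node \<Rightarrow> real" where
  "arc_cost g u v = (case (u, v) of
        (Nd s k, Nd t k') \<Rightarrow> g t (real (k' - k))
      | _ \<Rightarrow> 0)"

definition st_path :: "nat \<Rightarrow> nat \<Rightarrow> (nat \<Rightarrow> nat) \<Rightarrow> node list \<Rightarrow> bool" where
  "st_path T Gamma Delta p \<longleftrightarrow> p \<noteq> [] \<and> hd p = Nd 0 0 \<and> last p = Snk \<and>
     (\<forall>i. Suc i < length p \<longrightarrow> is_arc T Gamma Delta (p ! i) (p ! Suc i))"

definition path_length :: "(nat \<Rightarrow> real \<Rightarrow> real) \<Rightarrow> node list \<Rightarrow> real" where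
  "path_length g p = (\<Sum>(u, v)\<leftarrow>zip p (tl p). arc_cost g u v)"

end

theory Submission
  imports Defs
begin


lemma shift1: "(\<Sum>t\<in>{1..T}. f t) = (\<Sum>i<T. f (Suc i))" for f :: "nat \<Rightarrow> 'a::comm_monoid_add"
  using sum.atLeast1_atMost_eq[of f T] by (simp add: One_nat_def)

definition cvx :: "(real \<Rightarrow> real) \<Rightarrow> bool" where
  "cvx f \<longleftrightarrow> (\<forall>u v l. 0 \<le> l \<longrightarrow> l \<le> 1 \<longrightarrow> f (l*u + (1-l)*v) \<le> l * f u + (1-l) * f v)"

lemma cvx_max: "cvx (\<lambda>d. max (a + b*d) (c + e*d))"
  unfolding cvx_def
proof (intro allI impI)
  fix u v l :: real assume l: "0 \<le> l" "l \<le> 1"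
  have 1: "a + b*(l*u+(1-l)*v) = l*(a+b*u) + (1-l)*(a+b*v)" by (simp add: algebra_simps)
  have 2: "c + e*(l*u+(1-l)*v) = l*(c+e*u) + (1-l)*(c+e*v)" by (simp add: algebra_simps)
  have m1: "l*(a+b*u) \<le> l * max (a+b*u) (c+e*u)" "l*(c+e*u) \<le> l * max (a+b*u) (c+e*u)"
    using l by (auto intro: mult_left_mono)
  have m2: "(1-l)*(a+b*v) \<le> (1-l) * max (a+b*v) (c+e*v)" "(1-l)*(c+e*v) \<le> (1-l) * max (a+b*v) (c+e*v)"
    using l by (auto intro: mult_left_mono)
  show "max (a + b*(l*u+(1-l)*v)) (c + e*(l*u+(1-l)*v)) \<le> l * max (a+b*u) (c+e*u) + (1-l) * max (a+b*v) (c+e*v)"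
    unfolding 1 2 using m1 m2 by linarith
qed

lemma cvx_shift: "cvx f \<Longrightarrow> cvx (\<lambda>s. f (x + s))"
  unfolding cvx_def
proof (intro allI impI)
  fix u v l :: real assume c: "\<forall>u v l. 0 \<le> l \<longrightarrow> l \<le> 1 \<longrightarrow> f (l*u + (1-l)*v) \<le> l * f u + (1-l) * f v"
    and l: "0 \<le> l" "l \<le> 1"
  have "x + (l*u+(1-l)*v) = l*(x+u) + (1-l)*(x+v)" by (simp add: algebra_simps)
  then show "f (x + (l*u+(1-l)*v)) \<le> l * f (x+u) + (1-l) * f (x+v)" using c l by metis
qed

lemma cvx_neg: "cvx f \<Longrightarrow> cvx (\<lambda>s. f (x - s))"
  unfolding cvx_def
proof (intro allI impI)
  fix u v l :: real assume c: "\<forall>u v l. 0 \<le> l \<longrightarrow> l \<le> 1 \<longrightarrow> f (l*u + (1-l)*v) \<le> l * f u + (1-l) * f v"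
    and l: "0 \<le> l" "l \<le> 1"
  have "x - (l*u+(1-l)*v) = l*(x-u) + (1-l)*(x-v)" by (simp add: algebra_simps)
  then show "f (x - (l*u+(1-l)*v)) \<le> l * f (x-u) + (1-l) * f (x-v)" using c l by metis
qed

lemma cvx_add: "cvx f \<Longrightarrow> cvx h \<Longrightarrow> cvx (\<lambda>s. f s + h s)"
  unfolding cvx_def by (simp add: algebra_simps) (smt (verit))

lemma cvx_two: assumes "cvx f" "a \<le> 0" "0 \<le> b" shows "f 0 \<le> max (f a) (f b)"
proof (cases "a = b")
  case True then show ?thesis using assms by simp
next
  case False
  then have ab: "a < b" using assms by simp
  define l where "l = b / (b - a)"
  have l: "0 \<le> l" "l \<le> 1" using assms ab by (auto simp: l_def divide_simps)
  have "l*a + (1-l)*b = 0" using ab by (simp add: l_def field_simps)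
  then have "f 0 \<le> l * f a + (1-l) * f b" using assms(1) l unfolding cvx_def by metis
  also have "\<dots> \<le> l * max (f a) (f b) + (1-l) * max (f a) (f b)"
    using l by (intro add_mono mult_left_mono) auto
  finally show ?thesis by (simp add: algebra_simps)
qed

lemma g_cvx: "cvx (period_cost T cP cI cB bP Dhat x t)"
proof -
  let ?X = "cumX x t"
  show ?thesis
  proof (cases "t < T")
    case True
    have "period_cost T cP cI cB bP Dhat x t = (\<lambda>d. max (cI*(?X - Dhat t) + cI*d) (cB*(Dhat t - ?X) + cB*d))"
      using True by (auto simp: period_cost_def fI_def fB_def algebra_simps)
    then show ?thesis using cvx_max by simp
  next
    case False
    have "period_cost T cP cI cB bP Dhat x t = (\<lambda>d. max (cI*(?X - Dhat t) + cP*?X - bP*Dhat t + (cI+bP)*d)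
        (cB*(Dhat t - ?X) + cP*?X - bP*?X + cB*d))"
      using False by (auto simp: period_cost_def fI_def fB_def algebra_simps)
    then show ?thesis using cvx_max by simp
  qed
qed

lemma sum_upd: assumes "i \<in> A" "finite A"
  shows "(\<Sum>t\<in>A. h t ((f(i:=v)) t)) = (\<Sum>t\<in>A. h t (f t)) - h i (f i) + (h i (v::real) :: real)"
proof -
  have "(\<Sum>t\<in>A. h t ((f(i:=v)) t)) = h i v + (\<Sum>t\<in>A-{i}. h t ((f(i:=v)) t))"
    using assms by (simp add: sum.remove)
  also have "(\<Sum>t\<in>A-{i}. h t ((f(i:=v)) t)) = (\<Sum>t\<in>A-{i}. h t (f t))" by (rule sum.cong) auto
  also have "\<dots> = (\<Sum>t\<in>A. h t (f t)) - h i (f i)" using assms by (simp add: sum.remove)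
  finally show ?thesis by (simp add: algebra_simps)
qed

lemma floor_ceil_bounds:
  assumes "0 \<le> y" "y \<le> real n"
  shows "0 \<le> real_of_int \<lfloor>y\<rfloor>" "real_of_int \<lceil>y\<rceil> \<le> real n"
    "real_of_int \<lfloor>y\<rfloor> \<le> y" "y \<le> real_of_int \<lceil>y\<rceil>"
proof -
  show "0 \<le> real_of_int \<lfloor>y\<rfloor>" using assms by simp
  have "\<lceil>y\<rceil> \<le> int n" using assms by (simp add: ceiling_le_iff)
  then show "real_of_int \<lceil>y\<rceil> \<le> real n" by linarith
  show "real_of_int \<lfloor>y\<rfloor> \<le> y" by simp
  show "y \<le> real_of_int \<lceil>y\<rceil>" by simp
qed

lemma rounding:
  fixes g :: "nat \<Rightarrow> real \<Rightarrow> real"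
  assumes cv: "\<And>t. cvx (g t)"
  shows "feasible_dev T Gamma Delta \<delta> \<Longrightarrow> \<exists>\<delta>'. feasible_dev T Gamma Delta \<delta>' \<and>
     (\<forall>t\<in>{1..T}. \<delta>' t \<in> \<int>) \<and> objective T g \<delta> \<le> objective T g \<delta>'"
proof (induction "card {t\<in>{1..T}. \<delta> t \<notin> \<int>}" arbitrary: \<delta> rule: less_induct)
  case less
  let ?F = "{t\<in>{1..T}. \<delta> t \<notin> \<int>}"
  have fin: "finite {1..T}" by simp
  have fs: "(\<Sum>t\<in>{1..T}. \<delta> t) \<le> real Gamma" and fb: "\<And>t. t\<in>{1..T} \<Longrightarrow> 0 \<le> \<delta> t \<and> \<delta> t \<le> real (Delta t)"
    using less.prems unfolding feasible_dev_def by auto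
  consider (z) "?F = {}" | (two) i j where "i\<in>?F" "j\<in>?F" "i\<noteq>j" | (one) i where "?F = {i}"
    by blast
  then show ?case
  proof cases
    case z
    then show ?thesis using less.prems by blast
  next
    case (one i)
    then have i: "i \<in> {1..T}" "\<delta> i \<notin> \<int>" by auto
    define N where "N = (\<Sum>t\<in>{1..T}-{i}. \<delta> t)"
    have NZ: "N \<in> \<int>" unfolding N_def using one by (intro Ints_sum) auto
    then obtain n where n: "N = of_int n" by (auto elim: Ints_cases)
    have sumN: "(\<Sum>t\<in>{1..T}. \<delta> t) = N + \<delta> i" unfolding N_def using i by (simp add: sum.remove)
    have cvi: "cvx (\<lambda>s. g i (\<delta> i + s))" by (rule cvx_shift[OF cv])
    have "g i (\<delta> i + 0) \<le> max (g i (\<delta> i + (of_int \<lfloor>\<delta> i\<rfloor> - \<delta> i))) (g i (\<delta> i + (of_int \<lceil>\<delta> i\<rceil> - \<delta> i)))"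
      by (rule cvx_two[OF cvi, of "of_int \<lfloor>\<delta> i\<rfloor> - \<delta> i" "of_int \<lceil>\<delta> i\<rceil> - \<delta> i"]) auto
    then obtain v where v: "v = of_int \<lfloor>\<delta> i\<rfloor> \<or> v = of_int \<lceil>\<delta> i\<rceil>" and gv: "g i (\<delta> i) \<le> g i v"
      by (auto simp: max_def split: if_splits)
    define \<delta>' where "\<delta>' = \<delta>(i := v)"
    have fbi: "0 \<le> \<delta> i" "\<delta> i \<le> real (Delta i)" using fb[OF i(1)] by auto
    have bi: "0 \<le> v" "v \<le> real (Delta i)" using v floor_ceil_bounds[OF fbi] fbi by (smt (verit))+
    have "(\<Sum>t\<in>{1..T}. \<delta>' t) = N + v"
      unfolding \<delta>'_def using sum_upd[OF i(1) fin, of "\<lambda>t y. y" \<delta> v] sumN by simp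
    also have "\<dots> \<le> real Gamma"
    proof -
      have "\<lceil>N + \<delta> i\<rceil> \<le> int Gamma" using fs sumN by (simp add: ceiling_le_iff)
      moreover have "\<lceil>N + \<delta> i\<rceil> = n + \<lceil>\<delta> i\<rceil>" using n by (metis add.commute ceiling_add_of_int)
      ultimately have "n + \<lceil>\<delta> i\<rceil> \<le> int Gamma" by simp
      then have "N + of_int \<lceil>\<delta> i\<rceil> \<le> real Gamma" using n by linarith
      moreover have "N + of_int \<lfloor>\<delta> i\<rfloor> \<le> real Gamma" using fs sumN by linarith
      ultimately show ?thesis using v by auto
    qed
    finally have f1: "(\<Sum>t\<in>{1..T}. \<delta>' t) \<le> real Gamma" .
    have feas: "feasible_dev T Gamma Delta \<delta>'"
      unfolding feasible_dev_def using f1 fb bi by (auto simp: \<delta>'_def)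
    have ints: "\<forall>t\<in>{1..T}. \<delta>' t \<in> \<int>"
    proof
      fix t assume t: "t \<in> {1..T}"
      show "\<delta>' t \<in> \<int>"
      proof (cases "t = i")
        case True
        then show ?thesis using v by (auto simp: \<delta>'_def)
      next
        case False
        then have "t \<notin> ?F" using one by blast
        then show ?thesis using t False by (simp add: \<delta>'_def)
      qed
    qed
    have "objective T g \<delta>' = objective T g \<delta> - g i (\<delta> i) + g i v"
      unfolding objective_def \<delta>'_def using sum_upd[OF i(1) fin, of g \<delta> v] by simp
    then show ?thesis using feas ints gv by (intro exI[of _ \<delta>']) auto
  next
    case (two i j)
    then have i: "i \<in> {1..T}" "\<delta> i \<notin> \<int>" and j: "j \<in> {1..T}" "\<delta> j \<notin> \<int>" by auto
    define a where "a = max (of_int \<lfloor>\<delta> i\<rfloor> - \<delta> i) (\<delta> j - of_int \<lceil>\<delta> j\<rceil>)"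
    define b where "b = min (of_int \<lceil>\<delta> i\<rceil> - \<delta> i) (\<delta> j - of_int \<lfloor>\<delta> j\<rfloor>)"
    have a0: "a \<le> 0" and b0: "0 \<le> b" unfolding a_def b_def by auto
    have cvp: "cvx (\<lambda>s. g i (\<delta> i + s) + g j (\<delta> j - s))"
      by (intro cvx_add cvx_shift cvx_neg cv)
    have "g i (\<delta> i + 0) + g j (\<delta> j - 0) \<le> max (g i (\<delta> i + a) + g j (\<delta> j - a)) (g i (\<delta> i + b) + g j (\<delta> j - b))"
      by (rule cvx_two[OF cvp a0 b0])
    then obtain s where s: "s = a \<or> s = b" and gs: "g i (\<delta> i) + g j (\<delta> j) \<le> g i (\<delta> i + s) + g j (\<delta> j - s)"
      by (auto simp: max_def split: if_splits)
    have sab: "a \<le> s" "s \<le> b" using s a0 b0 by auto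
    define \<delta>' where "\<delta>' = (\<delta>(i := \<delta> i + s))(j := \<delta> j - s)"
    have ib: "of_int \<lfloor>\<delta> i\<rfloor> \<le> \<delta> i + s" "\<delta> i + s \<le> of_int \<lceil>\<delta> i\<rceil>"
      using sab unfolding a_def b_def by auto
    have jb: "of_int \<lfloor>\<delta> j\<rfloor> \<le> \<delta> j - s" "\<delta> j - s \<le> of_int \<lceil>\<delta> j\<rceil>"
      using sab unfolding a_def b_def by auto
    have fbi: "0 \<le> \<delta> i" "\<delta> i \<le> real (Delta i)" using fb[OF i(1)] by auto
    have fbj: "0 \<le> \<delta> j" "\<delta> j \<le> real (Delta j)" using fb[OF j(1)] by auto
    have bi: "0 \<le> \<delta> i + s" "\<delta> i + s \<le> real (Delta i)"
      using ib floor_ceil_bounds[OF fbi] by linarith+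
    have bj: "0 \<le> \<delta> j - s" "\<delta> j - s \<le> real (Delta j)"
      using jb floor_ceil_bounds[OF fbj] by linarith+
    have upd: "\<And>h::nat \<Rightarrow> real \<Rightarrow> real. (\<Sum>t\<in>{1..T}. h t (\<delta>' t)) =
        (\<Sum>t\<in>{1..T}. h t (\<delta> t)) - h i (\<delta> i) + h i (\<delta> i + s) - h j (\<delta> j) + h j (\<delta> j - s)"
    proof -
      fix h :: "nat \<Rightarrow> real \<Rightarrow> real"
      have "(\<Sum>t\<in>{1..T}. h t (\<delta>' t)) = (\<Sum>t\<in>{1..T}. h t ((\<delta>(i := \<delta> i + s)) t)) - h j ((\<delta>(i := \<delta> i + s)) j) + h j (\<delta> j - s)"
        unfolding \<delta>'_def by (rule sum_upd[OF j(1) fin])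
      also have "(\<Sum>t\<in>{1..T}. h t ((\<delta>(i := \<delta> i + s)) t)) = (\<Sum>t\<in>{1..T}. h t (\<delta> t)) - h i (\<delta> i) + h i (\<delta> i + s)"
        by (rule sum_upd[OF i(1) fin])
      finally show "(\<Sum>t\<in>{1..T}. h t (\<delta>' t)) =
        (\<Sum>t\<in>{1..T}. h t (\<delta> t)) - h i (\<delta> i) + h i (\<delta> i + s) - h j (\<delta> j) + h j (\<delta> j - s)"
        using two(3) by simp
    qed
    have "(\<Sum>t\<in>{1..T}. \<delta>' t) = (\<Sum>t\<in>{1..T}. \<delta> t)" using upd[of "\<lambda>t y. y"] by simp
    then have feas: "feasible_dev T Gamma Delta \<delta>'"
      unfolding feasible_dev_def using fs fb bi bj two(3) by (auto simp: \<delta>'_def)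
    have obj: "objective T g \<delta> \<le> objective T g \<delta>'"
      unfolding objective_def using upd[of g] gs by simp
    let ?F' = "{t\<in>{1..T}. \<delta>' t \<notin> \<int>}"
    have sub: "?F' \<subseteq> ?F" using two i j by (auto simp: \<delta>'_def)
    have "\<delta>' i \<in> \<int> \<or> \<delta>' j \<in> \<int>"
    proof -
      have di: "\<delta>' i = \<delta> i + s" "\<delta>' j = \<delta> j - s" using two(3) by (auto simp: \<delta>'_def)
      consider "s = of_int \<lfloor>\<delta> i\<rfloor> - \<delta> i" | "s = \<delta> j - of_int \<lceil>\<delta> j\<rceil>"
        | "s = of_int \<lceil>\<delta> i\<rceil> - \<delta> i" | "s = \<delta> j - of_int \<lfloor>\<delta> j\<rfloor>"
        using s unfolding a_def b_def max_def min_def by (auto split: if_splits)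
      then show ?thesis unfolding di by cases auto
    qed
    then have "?F' \<noteq> ?F" using two(1,2) by blast
    then have "card ?F' < card ?F" using sub by (intro psubset_card_mono) auto
    from less.hyps[OF this feas] obtain \<delta>'' where "feasible_dev T Gamma Delta \<delta>''"
      "\<forall>t\<in>{1..T}. \<delta>'' t \<in> \<int>" "objective T g \<delta>' \<le> objective T g \<delta>''" by blast
    then show ?thesis using obj by (intro exI[of _ \<delta>'']) auto
  qed
qed

definition walk :: "nat \<Rightarrow> (nat \<Rightarrow> nat) \<Rightarrow> nat \<Rightarrow> node" where
  "walk T k i = (if i \<le> T then Nd i (k i) else Snk)"

lemma plen_nth: "path_length g p = (\<Sum>i<length p - 1. arc_cost g (p!i) (p!Suc i))"
  unfolding path_length_def sum_list_sum_nth by (rule sum.cong) (auto simp: nth_tl atLeast0LessThan)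

lemma walk_path:
  assumes T1: "1 \<le> T" and k0: "k 0 = 0"
    and kc: "\<forall>i<T. k i \<le> k (Suc i) \<and> k (Suc i) - k i \<le> Delta (Suc i) \<and> k (Suc i) \<le> Gamma"
  shows "st_path T Gamma Delta (map (walk T k) [0..<T+2])"
    and "path_length g (map (walk T k) [0..<T+2]) = (\<Sum>i<T. g (Suc i) (real (k (Suc i) - k i)))"
proof -
  let ?p = "map (walk T k) [0..<T+2]"
  have kG: "\<And>i. 1 \<le> i \<Longrightarrow> i \<le> T \<Longrightarrow> k i \<le> Gamma"
  proof -
    fix i :: nat assume "1 \<le> i" "i \<le> T"
    then obtain j where "i = Suc j" "j < T" by (cases i) auto
    then show "k i \<le> Gamma" using kc by auto
  qed
  have vx: "\<And>i. i \<le> T \<Longrightarrow> is_vertex T Gamma (Nd i (k i))"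
    unfolding is_vertex_def using kG k0 by (case_tac i) auto
  have arcs: "\<forall>i. Suc i < length ?p \<longrightarrow> is_arc T Gamma Delta (?p ! i) (?p ! Suc i)"
  proof (intro allI impI)
    fix i assume "Suc i < length ?p"
    then have i: "i \<le> T" by simp
    show "is_arc T Gamma Delta (?p ! i) (?p ! Suc i)"
    proof (cases "i < T")
      case True
      then have "?p ! i = Nd i (k i)" "?p ! Suc i = Nd (Suc i) (k (Suc i))"
        by (auto simp: walk_def nth_append simp del: upt_Suc)
      then show ?thesis using vx[of i] vx[of "Suc i"] True kc
        unfolding is_arc_def by auto
    next
      case False
      then have "i = T" using i by simp
      then have "?p ! i = Nd T (k T)" "?p ! Suc i = Snk"
        by (auto simp: walk_def simp del: upt_Suc)
      then show ?thesis using vx[of T] T1 unfolding is_arc_def by (auto simp: is_vertex_def)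
    qed
  qed
  have "hd ?p = Nd 0 0" using k0 by (simp add: walk_def hd_map del: upt_Suc)
  moreover have "last ?p = Snk" by (simp add: walk_def last_map del: upt_Suc)
  ultimately show "st_path T Gamma Delta ?p" unfolding st_path_def using arcs by simp
  have "path_length g ?p = (\<Sum>i<T+1. arc_cost g (walk T k i) (walk T k (Suc i)))"
    unfolding plen_nth by (rule sum.cong) (auto simp del: upt_Suc)
  also have "\<dots> = (\<Sum>i<T. arc_cost g (walk T k i) (walk T k (Suc i))) + arc_cost g (walk T k T) (walk T k (Suc T))"
    by simp
  also have "arc_cost g (walk T k T) (walk T k (Suc T)) = 0" by (simp add: walk_def arc_cost_def)
  also have "(\<Sum>i<T. arc_cost g (walk T k i) (walk T k (Suc i))) = (\<Sum>i<T. g (Suc i) (real (k (Suc i) - k i)))"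
    by (rule sum.cong) (auto simp: walk_def arc_cost_def)
  finally show "path_length g ?p = (\<Sum>i<T. g (Suc i) (real (k (Suc i) - k i)))" by simp
qed

lemma path_walk:
  assumes P: "st_path T Gamma Delta q" and T1: "1 \<le> T"
  shows "\<exists>k. q = map (walk T k) [0..<T+2] \<and> k 0 = 0 \<and>
     (\<forall>i<T. k i \<le> k (Suc i) \<and> k (Suc i) - k i \<le> Delta (Suc i) \<and> k (Suc i) \<le> Gamma)"
proof -
  have ne: "q \<noteq> []" and hd: "hd q = Nd 0 0" and lst: "last q = Snk"
    and arc: "\<And>i. Suc i < length q \<Longrightarrow> is_arc T Gamma Delta (q ! i) (q ! Suc i)"
    using P unfolding st_path_def by auto
  have lastn: "q ! (length q - 1) = Snk" using ne lst by (simp add: last_conv_nth)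
  have L: "i \<le> T \<Longrightarrow> i < length q \<and> (\<exists>kk. q ! i = Nd i kk)" for i
  proof (induction i)
    case 0
    then show ?case using ne hd by (auto simp: hd_conv_nth)
  next
    case (Suc i)
    then obtain kk where i: "i < length q" "q ! i = Nd i kk" by auto
    have "Suc i < length q"
    proof (rule ccontr)
      assume "\<not> Suc i < length q"
      then have "i = length q - 1" using i by simp
      then show False using lastn i by simp
    qed
    moreover have "\<exists>kk'. q ! Suc i = Nd (Suc i) kk'"
      using arc[OF \<open>Suc i < length q\<close>] i Suc.prems
      by (cases "q ! Suc i") (auto simp: is_arc_def)
    ultimately show ?case by blast
  qed
  define k where "k i = (case q ! i of Nd _ kk \<Rightarrow> kk | Snk \<Rightarrow> 0)" for i
  have qi: "i \<le> T \<Longrightarrow> q ! i = Nd i (k i)" for i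
    using L[of i] by (auto simp: k_def)
  have "T < length q" using L[of T] by simp
  have "length q - 1 \<noteq> T" using lastn qi[of T] by auto
  then have T1l: "Suc T < length q" using \<open>T < length q\<close> by simp
  have qT1: "q ! Suc T = Snk"
    using arc[OF T1l] qi[of T] by (cases "q ! Suc T") (auto simp: is_arc_def)
  have len: "length q = T + 2"
  proof (rule ccontr)
    assume "length q \<noteq> T + 2"
    then have "Suc (Suc T) < length q" using T1l by simp
    then show False using arc[of "Suc T"] qT1 by (simp add: is_arc_def)
  qed
  have eq: "q = map (walk T k) [0..<T+2]"
  proof (rule nth_equalityI)
    show "length q = length (map (walk T k) [0..<T+2])" using len by simp
    fix i assume "i < length q"
    then have "i \<le> Suc T" using len by simp
    then show "q ! i = map (walk T k) [0..<T+2] ! i"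
    proof (cases "i \<le> T")
      case True then show ?thesis using qi \<open>i \<le> Suc T\<close> by (auto simp: walk_def simp del: upt_Suc)
    next
      case False then have "i = Suc T" using \<open>i \<le> Suc T\<close> by simp
      then show ?thesis using qT1 by (auto simp: walk_def simp del: upt_Suc)
    qed
  qed
  have k0: "k 0 = 0" using qi[of 0] hd ne by (simp add: hd_conv_nth)
  have kc: "\<forall>i<T. k i \<le> k (Suc i) \<and> k (Suc i) - k i \<le> Delta (Suc i) \<and> k (Suc i) \<le> Gamma"
  proof (intro allI impI)
    fix i assume "i < T"
    then have "Suc i < length q" using len by simp
    from arc[OF this] show "k i \<le> k (Suc i) \<and> k (Suc i) - k i \<le> Delta (Suc i) \<and> k (Suc i) \<le> Gamma"
      using qi[of i] qi[of "Suc i"] \<open>i < T\<close> by (simp add: is_arc_def)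
  qed
  show ?thesis using eq k0 kc by blast
qed

lemma path_to_dev:
  assumes T1: "1 \<le> T" and P: "st_path T Gamma Delta q"
  shows "\<exists>\<delta>. feasible_dev T Gamma Delta \<delta> \<and> objective T g \<delta> = path_length g q"
proof -
  obtain k where q: "q = map (walk T k) [0..<T+2]" and k0: "k 0 = 0"
    and kc: "\<forall>i<T. k i \<le> k (Suc i) \<and> k (Suc i) - k i \<le> Delta (Suc i) \<and> k (Suc i) \<le> Gamma"
    using path_walk[OF P T1] by blast
  define \<delta> where "\<delta> t = real (k t - k (t - 1))" for t
  have "objective T g \<delta> = (\<Sum>i<T. g (Suc i) (real (k (Suc i) - k i)))"
    unfolding objective_def shift1 by (simp add: \<delta>_def)
  also have "\<dots> = path_length g q" using walk_path(2)[OF T1 k0 kc] q by simp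
  finally have obj: "objective T g \<delta> = path_length g q" .
  have "(\<Sum>t\<in>{1..T}. \<delta> t) = (\<Sum>i<T. real (k (Suc i)) - real (k i))"
    unfolding shift1 \<delta>_def using kc by (intro sum.cong) (auto simp: of_nat_diff)
  also have "\<dots> = real (k T)" using sum_lessThan_telescope[of "\<lambda>i. real (k i)" T] k0 by simp
  also have "\<dots> \<le> real Gamma"
  proof -
    obtain j where "T = Suc j" using T1 by (cases T) auto
    then show ?thesis using kc by auto
  qed
  finally have s: "(\<Sum>t\<in>{1..T}. \<delta> t) \<le> real Gamma" .
  have b: "\<forall>t\<in>{1..T}. 0 \<le> \<delta> t \<and> \<delta> t \<le> real (Delta t)"
  proof
    fix t assume "t \<in> {1..T}"
    then obtain i where "t = Suc i" "i < T" by (cases t) auto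
    then show "0 \<le> \<delta> t \<and> \<delta> t \<le> real (Delta t)" using kc by (auto simp: \<delta>_def)
  qed
  show ?thesis using obj s b unfolding feasible_dev_def by blast
qed

lemma int_nat_floor: "(x::real) \<in> \<int> \<Longrightarrow> 0 \<le> x \<Longrightarrow> real (nat \<lfloor>x\<rfloor>) = x"
  by (auto elim: Ints_cases)

lemma dev_to_path:
  assumes T1: "1 \<le> T" and F: "feasible_dev T Gamma Delta \<delta>" and I: "\<forall>t\<in>{1..T}. \<delta> t \<in> \<int>"
  shows "\<exists>q. st_path T Gamma Delta q \<and> path_length g q = objective T g \<delta>"
proof -
  have fs: "(\<Sum>t\<in>{1..T}. \<delta> t) \<le> real Gamma" and fb: "\<And>t. t\<in>{1..T} \<Longrightarrow> 0 \<le> \<delta> t \<and> \<delta> t \<le> real (Delta t)"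
    using F unfolding feasible_dev_def by auto
  have rd: "\<And>t. t\<in>{1..T} \<Longrightarrow> real (nat \<lfloor>\<delta> t\<rfloor>) = \<delta> t" using I fb int_nat_floor by blast
  define k where "k t = (\<Sum>s\<in>{1..t}. nat \<lfloor>\<delta> s\<rfloor>)" for t
  have k0: "k 0 = 0" by (simp add: k_def)
  have kS: "k (Suc i) = k i + nat \<lfloor>\<delta> (Suc i)\<rfloor>" for i by (simp add: k_def)
  have kT: "real (k T) \<le> real Gamma"
  proof -
    have "real (k T) = (\<Sum>s\<in>{1..T}. real (nat \<lfloor>\<delta> s\<rfloor>))" by (simp add: k_def)
    also have "\<dots> = (\<Sum>s\<in>{1..T}. \<delta> s)" by (rule sum.cong) (auto simp: rd)
    finally show ?thesis using fs by simp
  qed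
  have kmono: "i \<le> T \<Longrightarrow> k i \<le> k T" for i unfolding k_def by (rule sum_mono2) auto
  have kc: "\<forall>i<T. k i \<le> k (Suc i) \<and> k (Suc i) - k i \<le> Delta (Suc i) \<and> k (Suc i) \<le> Gamma"
  proof (intro allI impI)
    fix i assume i: "i < T"
    have "real (nat \<lfloor>\<delta> (Suc i)\<rfloor>) \<le> real (Delta (Suc i))" using rd[of "Suc i"] fb[of "Suc i"] i by auto
    then have "nat \<lfloor>\<delta> (Suc i)\<rfloor> \<le> Delta (Suc i)" by linarith
    moreover have "k (Suc i) \<le> Gamma" using kmono[of "Suc i"] kT i by simp
    ultimately show "k i \<le> k (Suc i) \<and> k (Suc i) - k i \<le> Delta (Suc i) \<and> k (Suc i) \<le> Gamma"
      by (simp add: kS)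
  qed
  have "path_length g (map (walk T k) [0..<T+2]) = (\<Sum>i<T. g (Suc i) (real (k (Suc i) - k i)))"
    by (rule walk_path(2)[OF T1 k0 kc])
  also have "\<dots> = (\<Sum>i<T. g (Suc i) (\<delta> (Suc i)))"
    by (rule sum.cong) (auto simp: kS rd)
  also have "\<dots> = objective T g \<delta>" unfolding objective_def shift1 ..
  finally show ?thesis using walk_path(1)[OF T1 k0 kc] by blast
qed



theorem proposition2:
  fixes T :: nat and cP cI cB bP :: real
    and m :: nat and A :: "nat \<Rightarrow> nat \<Rightarrow> real" and b :: "nat \<Rightarrow> real"
    and x :: "nat \<Rightarrow> real" and Dhat :: "nat \<Rightarrow> real"
    and Delta :: "nat \<Rightarrow> nat" and Gamma :: nat and C :: real
  defines "Xset \<equiv> {y :: nat \<Rightarrow> real. (\<forall>i\<in>{1..T}. 0 \<le> y i) \<and>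
                     (\<forall>j<m. (\<Sum>i\<in>{1..T}. A j i * y i) \<le> b j)}"
    and "g \<equiv> period_cost T cP cI cB bP Dhat x"
  assumes "1 \<le> T"
    and "x \<in> Xset"
    and "\<forall>t\<in>{1..T}. 0 \<le> Dhat t"
    and "\<forall>s\<in>{1..T}. \<forall>t\<in>{1..T}. s \<le> t \<longrightarrow> Dhat s \<le> Dhat t"
    and "\<forall>t\<in>{1..T}. real (Delta t) \<le> Dhat t"
  shows "(\<exists>\<delta>. feasible_dev T Gamma Delta \<delta> \<and> objective T g \<delta> = C \<and>
             (\<forall>\<delta>'. feasible_dev T Gamma Delta \<delta>' \<longrightarrow> objective T g \<delta>' \<le> C))
     \<longleftrightarrow>
         (\<exists>p. st_path T Gamma Delta p \<and> path_length g p = C \<and>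
             (\<forall>q. st_path T Gamma Delta q \<longrightarrow> path_length g q \<le> C))"
  proof -
  have T1: "1 \<le> T" by fact
  have cv: "\<And>t. cvx (g t)" unfolding g_def using g_cvx by blast
  have A: "\<And>q. st_path T Gamma Delta q \<Longrightarrow> \<exists>\<delta>. feasible_dev T Gamma Delta \<delta> \<and> objective T g \<delta> = path_length g q"
    by (rule path_to_dev[OF T1])
  have B: "\<And>\<delta>. feasible_dev T Gamma Delta \<delta> \<Longrightarrow> \<exists>q. st_path T Gamma Delta q \<and> objective T g \<delta> \<le> path_length g q"
  proof -
    fix \<delta> assume "feasible_dev T Gamma Delta \<delta>"
    from rounding[of g, OF cv this] obtain \<delta>' where d': "feasible_dev T Gamma Delta \<delta>'"
      "\<forall>t\<in>{1..T}. \<delta>' t \<in> \<int>" "objective T g \<delta> \<le> objective T g \<delta>'" by blast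
    from dev_to_path[OF T1 d'(1,2)] obtain q where "st_path T Gamma Delta q" "path_length g q = objective T g \<delta>'"
      by blast
    then show "\<exists>q. st_path T Gamma Delta q \<and> objective T g \<delta> \<le> path_length g q" using d'(3) by auto
  qed
  show ?thesis
  proof
    assume "\<exists>\<delta>. feasible_dev T Gamma Delta \<delta> \<and> objective T g \<delta> = C \<and>
             (\<forall>\<delta>'. feasible_dev T Gamma Delta \<delta>' \<longrightarrow> objective T g \<delta>' \<le> C)"
    then obtain \<delta> where d: "feasible_dev T Gamma Delta \<delta>" "objective T g \<delta> = C"
      "\<forall>\<delta>'. feasible_dev T Gamma Delta \<delta>' \<longrightarrow> objective T g \<delta>' \<le> C" by blast
    from B[OF d(1)] obtain q where q: "st_path T Gamma Delta q" "C \<le> path_length g q" using d(2) by auto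
    have all: "\<forall>q. st_path T Gamma Delta q \<longrightarrow> path_length g q \<le> C"
    proof (intro allI impI)
      fix q' assume "st_path T Gamma Delta q'"
      from A[OF this] show "path_length g q' \<le> C" using d(3) by force
    qed
    then have "path_length g q = C" using q by force
    then show "\<exists>p. st_path T Gamma Delta p \<and> path_length g p = C \<and>
             (\<forall>q. st_path T Gamma Delta q \<longrightarrow> path_length g q \<le> C)" using q(1) all by blast
  next
    assume "\<exists>p. st_path T Gamma Delta p \<and> path_length g p = C \<and>
             (\<forall>q. st_path T Gamma Delta q \<longrightarrow> path_length g q \<le> C)"
    then obtain p where p: "st_path T Gamma Delta p" "path_length g p = C"
      "\<forall>q. st_path T Gamma Delta q \<longrightarrow> path_length g q \<le> C" by blast
    from A[OF p(1)] obtain \<delta> where d: "feasible_dev T Gamma Delta \<delta>" "objective T g \<delta> = C"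
      using p(2) by auto
    have "\<forall>\<delta>'. feasible_dev T Gamma Delta \<delta>' \<longrightarrow> objective T g \<delta>' \<le> C"
    proof (intro allI impI)
      fix \<delta>' assume "feasible_dev T Gamma Delta \<delta>'"
      from B[OF this] show "objective T g \<delta>' \<le> C" using p(3) by force
    qed
    then show "\<exists>\<delta>. feasible_dev T Gamma Delta \<delta> \<and> objective T g \<delta> = C \<and>
             (\<forall>\<delta>'. feasible_dev T Gamma Delta \<delta>' \<longrightarrow> objective T g \<delta>' \<le> C)" using d by blast
  qed
qed

end
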